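(* For integers $k\ge 2$, $N\ge 2$, $$\det(\widetilde H)=\frac{N^{\binom{k}{2}}}{k!}\prod_{i=1}^{k-1}(iN+1).$$
   Context: $H[c,c'] = \#\{(d_1,\ldots,d_k)\in\{0,\ldots,N-1\}^k : \lfloor (d_1+\cdots+d_k+c)/N\rfloor = c'\}$ for $c,c'\in\{0,\ldots,k-1\}$; $\widetilde H$ is the leading $(k-1)\times(k-1)$ principal submatrix of $H$ (indices $0,\ldots,k-2$). *)

theory Defs
  imports "HOL-Library.FuncSet" "Jordan_Normal_Form.Determinant"
begin

definition carryH :: "nat \<Rightarrow> nat \<Rightarrow> nat \<Rightarrow> nat \<Rightarrow> nat" where
  "carryH k N c c' = card {d \<in> {0..<k} \<rightarrow>\<^sub>E {0..<N}. ((\<Sum>i<k. d i) + c) div N = c'}"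

definition Htilde :: "nat \<Rightarrow> nat \<Rightarrow> int mat" where
  "Htilde k N = mat (k - 1) (k - 1) (\<lambda>(c, c'). int (carryH k N c c'))"

end

theory Submission imports Defs "HOL-Computational_Algebra.Polynomial" begin

lemma sum_PiE_Suc:
  fixes F :: "nat \<Rightarrow> 'b::comm_monoid_add"
  assumes "finite S"
  shows "(\<Sum>d\<in>{0..<Suc k} \<rightarrow>\<^sub>E S. F (\<Sum>i<Suc k. d i))
       = (\<Sum>a\<in>S. \<Sum>d\<in>{0..<k} \<rightarrow>\<^sub>E S. F (a + (\<Sum>i<k. d i)))"
proof -
  have eq: "{0..<Suc k} \<rightarrow>\<^sub>E S = (\<lambda>(y, g). g(k := y)) ` (S \<times> ({0..<k} \<rightarrow>\<^sub>E S))"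
    using PiE_insert_eq[of k "{0..<k}" "\<lambda>_. S"] by (simp add: atLeast0_lessThan_Suc)
  have inj: "inj_on (\<lambda>(y, g). g(k := y)) (S \<times> ({0..<k} \<rightarrow>\<^sub>E S))"
  proof (rule inj_onI, clarify)
    fix a g b h
    assume g: "g \<in> {0..<k} \<rightarrow>\<^sub>E S" and h: "h \<in> {0..<k} \<rightarrow>\<^sub>E S" and e: "g(k := a) = h(k := b)"
    have "a = b" using fun_cong[OF e, of k] by simp
    moreover have "g = h"
    proof
      fix x show "g x = h x"
      proof (cases "x = k")
        case True then show ?thesis using g h by (auto simp: PiE_def extensional_def)
      next
        case False then show ?thesis using fun_cong[OF e, of x] by simp
      qed
    qed
    ultimately show "a = b \<and> g = h" by simp
  qed
  have s: "(\<Sum>i<Suc k. (g(k := a)) i) = a + (\<Sum>i<k. g i)" for g :: "nat \<Rightarrow> nat" and a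
    by (simp add: sum.lessThan_Suc)
  have s': "(\<Sum>i<k. (g(k := a)) i) = (\<Sum>i<k. g i)" for g :: "nat \<Rightarrow> nat" and a
    by (rule sum.cong) auto
  show ?thesis
    unfolding eq
    by (subst sum.reindex[OF inj]) (auto simp: sum.cartesian_product s' add.commute intro!: sum.cong)
qed

lemma sum_blocks:
  fixes g :: "nat \<Rightarrow> 'b::comm_monoid_add"
  shows "(\<Sum>a<N. \<Sum>r<R. g (a + r * N)) = (\<Sum>b<R * N. g b)"
proof (induction R)
  case 0 then show ?case by simp
next
  case (Suc R)
  have "(\<Sum>b<Suc R * N. g b) = (\<Sum>b<R * N. g b) + (\<Sum>b\<in>{R*N..<R*N+N}. g b)"
    by (simp add: sum.atLeastLessThan_concat[symmetric] lessThan_atLeast0 add.commute)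
  also have "(\<Sum>b\<in>{R*N..<R*N+N}. g b) = (\<Sum>a<N. g (a + R * N))"
    using sum.shift_bounds_nat_ivl[of g 0 "R*N" N] by (simp add: lessThan_atLeast0 add.commute)
  finally show ?case using Suc by (simp add: sum.distrib)
qed

lemma sum_if_prefix:
  fixes f :: "nat \<Rightarrow> 'b::comm_monoid_add"
  assumes "m \<le> n" and "\<And>r. r < n \<Longrightarrow> P r \<longleftrightarrow> r < m"
  shows "(\<Sum>r<n. if P r then f r else 0) = (\<Sum>r<m. f r)"
proof -
  have u: "{..<n} = {..<m} \<union> {m..<n}" using assms(1) by auto
  have "(\<Sum>r<n. if P r then f r else 0) = (\<Sum>r<m. if P r then f r else 0) + (\<Sum>r\<in>{m..<n}. if P r then f r else 0)"
    unfolding u by (rule sum.union_disjoint) auto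
  also have "(\<Sum>r\<in>{m..<n}. if P r then f r else 0) = 0"
    using assms by (intro sum.neutral) auto
  also have "(\<Sum>r<m. if P r then f r else 0) = (\<Sum>r<m. f r)"
    using assms by (intro sum.cong) auto
  finally show ?thesis by simp
qed

definition VV :: "nat \<Rightarrow> nat \<Rightarrow> nat \<Rightarrow> nat \<Rightarrow> nat" where
  "VV u N k y = (if y div N \<le> u then (u - y div N + k) choose k else 0)"

definition Phi :: "nat \<Rightarrow> nat \<Rightarrow> nat \<Rightarrow> nat \<Rightarrow> nat" where
  "Phi u N k x = (\<Sum>d\<in>{0..<k} \<rightarrow>\<^sub>E {0..<N}. VV u N k ((\<Sum>i<k. d i) + x))"

lemma sum_choose_rev: "(\<Sum>r<Suc m. (m - r + k) choose k) = (m + k + 1) choose (k + 1)"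
proof -
  have "(\<Sum>r<Suc m. (m - r + k) choose k) = (\<Sum>r<Suc m. (Suc m - Suc r + k) choose k)"
    by simp
  also have "\<dots> = (\<Sum>r<Suc m. (r + k) choose k)"
    using sum.nat_diff_reindex[of "\<lambda>r. (r + k) choose k" "Suc m"] by simp
  also have "\<dots> = (\<Sum>r\<le>m. (k + r) choose k)"
    by (simp add: lessThan_Suc_atMost add.commute)
  also have "\<dots> = (m + k + 1) choose (k + 1)"
    by (subst choose_rising_sum(1)) (simp add: add.commute)
  finally show ?thesis .
qed

lemma VV_Suc:
  assumes N: "N > 0"
  shows "VV u N (Suc k) y = (\<Sum>r<Suc u. VV u N k (y + r * N))"
proof -
  define j where "j = y div N"
  have dv: "(y + r * N) div N = j + r" for r using N unfolding j_def by simp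
  show ?thesis
  proof (cases "j \<le> u")
    case True
    define m where "m = u - j"
    have "(\<Sum>r<Suc u. VV u N k (y + r * N)) = (\<Sum>r<Suc u. if r \<le> m then (m - r + k) choose k else 0)"
      using True by (intro sum.cong) (auto simp: VV_def dv m_def)
    also have "\<dots> = (\<Sum>r<Suc m. (m - r + k) choose k)"
      using True m_def by (intro sum_if_prefix) auto
    also have "\<dots> = (m + k + 1) choose (k + 1)" by (rule sum_choose_rev)
    finally show ?thesis using True by (simp add: VV_def j_def[symmetric] m_def)
  next
    case False
    then show ?thesis by (auto simp: VV_def dv j_def[symmetric] intro!: sum.neutral)
  qed
qed

lemma Phi_formula:
  assumes N: "N > 0"
  shows "Phi u N k x = (if x < Suc u * N then (Suc u * N - x + k - 1) choose k else 0)"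
proof (induction k arbitrary: x)
  case 0
  have "x < Suc u * N \<Longrightarrow> x div N \<le> u"
    using N by (simp add: div_less_iff_less_mult less_Suc_eq_le[symmetric])
  moreover have "\<not> x < Suc u * N \<Longrightarrow> \<not> x div N \<le> u"
    using N by (metis div_less_iff_less_mult less_Suc_eq_le mult.commute)
  ultimately show ?case by (auto simp: Phi_def VV_def)
next
  case (Suc k)
  define M where "M = Suc u * N"
  have "Phi u N (Suc k) x = (\<Sum>a<N. \<Sum>d\<in>{0..<k} \<rightarrow>\<^sub>E {0..<N}. VV u N (Suc k) (a + (\<Sum>i<k. d i) + x))"
    unfolding Phi_def
    using sum_PiE_Suc[of "{0..<N}" "\<lambda>s. VV u N (Suc k) (s + x)" k]
    by (simp add: lessThan_atLeast0 add.assoc)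
  also have "\<dots> = (\<Sum>a<N. \<Sum>r<Suc u. Phi u N k (x + (a + r * N)))"
    unfolding Phi_def VV_Suc[OF N]
    by (subst sum.swap) (simp add: ac_simps)
  also have "\<dots> = (\<Sum>b<M. Phi u N k (x + b))"
    unfolding M_def by (rule sum_blocks)
  also have "\<dots> = (\<Sum>b<M. if x + b < M then (M - (x + b) + k - 1) choose k else 0)"
    unfolding M_def by (simp add: Suc.IH)
  also have "\<dots> = (if x < M then (M - x + Suc k - 1) choose Suc k else 0)"
  proof (cases "x < M")
    case True
    define L where "L = M - x"
    have "(\<Sum>b<M. if x + b < M then (M - (x + b) + k - 1) choose k else 0)
        = (\<Sum>b<L. (M - (x + b) + k - 1) choose k)"
      using True L_def by (intro sum_if_prefix) auto
    also have "\<dots> = (\<Sum>b<Suc (L - 1). ((L - 1) - b + k) choose k)"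
      using True L_def by (intro sum.cong) auto
    also have "\<dots> = (L - 1 + k + 1) choose (k + 1)" by (rule sum_choose_rev)
    also have "L - 1 + k + 1 = M - x + Suc k - 1" using True L_def by simp
    finally show ?thesis using True by simp
  next
    case False
    then show ?thesis by simp
  qed
  finally show ?case by (simp add: M_def)
qed

lemma carry_T_sum:
  assumes N: "N > 0" and u: "u < n" and n: "n = k - 1"
  shows "(\<Sum>j<n. carryH k N i j * (if j \<le> u then (u - j + k) choose k else 0)) = Phi u N k i"
proof -
  let ?D = "{0..<k} \<rightarrow>\<^sub>E {0..<N}"
  let ?J = "\<lambda>d. ((\<Sum>l<k. d l) + i) div N"
  have fin: "finite ?D" by (simp add: finite_PiE)
  have "(\<Sum>j<n. carryH k N i j * (if j \<le> u then (u - j + k) choose k else 0))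
      = (\<Sum>j<n. \<Sum>d\<in>?D. if ?J d = j then (if j \<le> u then (u - j + k) choose k else 0) else 0)"
  proof (rule sum.cong[OF refl])
    fix j
    have "carryH k N i j = card {d \<in> ?D. ?J d = j}" unfolding carryH_def by simp
    then show "carryH k N i j * (if j \<le> u then (u - j + k) choose k else 0)
        = (\<Sum>d\<in>?D. if ?J d = j then (if j \<le> u then (u - j + k) choose k else 0) else 0)"
      using fin by (simp add: sum.inter_filter[symmetric])
  qed
  also have "\<dots> = (\<Sum>d\<in>?D. \<Sum>j<n. if ?J d = j then (if j \<le> u then (u - j + k) choose k else 0) else 0)"
    by (rule sum.swap)
  also have "\<dots> = (\<Sum>d\<in>?D. VV u N k ((\<Sum>l<k. d l) + i))"
  proof (rule sum.cong[OF refl])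
    fix d
    show "(\<Sum>j<n. if ?J d = j then (if j \<le> u then (u - j + k) choose k else 0) else 0) = VV u N k ((\<Sum>l<k. d l) + i)"
      using u by (subst sum.delta') (auto simp: VV_def)
  qed
  finally show ?thesis unfolding Phi_def .
qed

lemma det_ut:
  fixes f :: "nat \<times> nat \<Rightarrow> 'a::comm_ring_1"
  assumes "\<And>i j. j < i \<Longrightarrow> i < n \<Longrightarrow> f (i, j) = 0"
  shows "det (mat n n f) = (\<Prod>i<n. f (i, i))"
proof -
  have "upper_triangular (mat n n f)" using assms unfolding upper_triangular_def by auto
  then have "det (mat n n f) = prod_list (diag_mat (mat n n f))"
    using det_upper_triangular[of "mat n n f" n] by simp
  also have "\<dots> = (\<Prod>i<n. f (i, i))"
    by (simp add: prod_list_diag_prod lessThan_atLeast0)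
  finally show ?thesis .
qed

lemma mat_mult_entry:
  fixes f g :: "nat \<times> nat \<Rightarrow> 'a::comm_ring_1"
  shows "mat n n f * mat n n g = mat n n (\<lambda>(i, j). \<Sum>l<n. f (i, l) * g (l, j))"
  by (rule eq_matI) (auto simp: scalar_prod_def lessThan_atLeast0 intro!: sum.cong)

lemma step1:
  assumes N: "N > 0" and n: "n = k - 1"
  shows "det (map_mat (of_int :: int \<Rightarrow> rat) (Htilde k N))
       = det (mat n n (\<lambda>(i, u). of_nat (Phi u N k i) :: rat))"
proof -
  define Tm :: "rat mat" where "Tm = mat n n (\<lambda>(j, u). if j \<le> u then of_nat ((u - j + k) choose k) else 0)"
  have Hq: "map_mat (of_int :: int \<Rightarrow> rat) (Htilde k N) = mat n n (\<lambda>(i, j). of_nat (carryH k N i j))"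
    unfolding Htilde_def n by (rule eq_matI) auto
  have E: "(\<Sum>l<n. of_nat (carryH k N i l) * (if l \<le> u then of_nat ((u - l + k) choose k) else 0)) = (of_nat (Phi u N k i) :: rat)"
    if i: "i < n" and True: "u < n" for i u
  proof -
    have PP: "(of_nat (Phi u N k i) :: rat) = of_nat (\<Sum>j<n. carryH k N i j * (if j \<le> u then (u - j + k) choose k else 0))"
      using carry_T_sum[OF N True n] by simp
    show ?thesis
      unfolding PP of_nat_sum by (intro sum.cong) auto
  qed
  have prod: "map_mat (of_int :: int \<Rightarrow> rat) (Htilde k N) * Tm = mat n n (\<lambda>(i, u). of_nat (Phi u N k i))"
    unfolding Hq Tm_def mat_mult_entry
    by (rule eq_matI) (auto simp: E)
  have dT: "det Tm = 1"
    unfolding Tm_def by (subst det_ut) auto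
  have "det (map_mat (of_int :: int \<Rightarrow> rat) (Htilde k N) * Tm) = det (map_mat (of_int :: int \<Rightarrow> rat) (Htilde k N)) * det Tm"
    by (rule det_mult[of _ n]) (auto simp: Tm_def Htilde_def n)
  then show ?thesis using prod dT by simp
qed

definition Qf :: "nat \<Rightarrow> nat \<Rightarrow> rat \<Rightarrow> rat" where
  "Qf k i Y = (\<Prod>r\<in>{0..<k} - {i, Suc i}. Y - of_nat i + of_nat r)"

lemma choose_as_prod:
  assumes "i < k - 1"
  shows "(of_nat (if i < M then (M - i + k - 1) choose k else 0) :: rat)
       = (\<Prod>r<k. of_nat M - of_nat i + of_nat r) / fact k"
proof (cases "i < M")
  case True
  define y where "y = M - i"
  have y1: "y \<ge> 1" using True y_def by simp
  have "(of_nat ((y + k - 1) choose k) :: rat) = of_nat (y + k - 1) gchoose k"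
    by (rule binomial_gbinomial)
  also have "\<dots> = pochhammer (of_nat (y + k - 1) - of_nat k + 1) k / fact k"
    by (rule gbinomial_pochhammer')
  also have "of_nat (y + k - 1) - of_nat k + 1 = (of_nat y :: rat)"
    using y1 by (simp add: of_nat_diff)
  also have "pochhammer (of_nat y :: rat) k = (\<Prod>r<k. of_nat M - of_nat i + of_nat r)"
    unfolding pochhammer_prod y_def using True by (simp add: of_nat_diff lessThan_atLeast0)
  finally show ?thesis using True y_def by simp
next
  case False
  have "i - M \<in> {..<k}" using assms by auto
  moreover have "(of_nat M - of_nat i + of_nat (i - M) :: rat) = 0" using False by (simp add: of_nat_diff)
  ultimately have "(\<Prod>r<k. of_nat M - of_nat i + of_nat r :: rat) = 0"
    by (metis (no_types, lifting) finite_lessThan prod_zero_iff)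
  then show ?thesis using False by simp
qed

lemma prod_split_Qf:
  assumes "i < k - 1"
  shows "(\<Prod>r<k. Y - of_nat i + of_nat r) = Y * (Y + 1) * Qf k i Y"
proof -
  have a: "i \<in> {0..<k}" and b: "Suc i \<in> {0..<k} - {i}" using assms by auto
  have "(\<Prod>r<k. Y - of_nat i + of_nat r) = (\<Prod>r\<in>{0..<k}. Y - of_nat i + of_nat r)"
    by (simp add: lessThan_atLeast0)
  also have "\<dots> = Y * (\<Prod>r\<in>{0..<k} - {i}. Y - of_nat i + of_nat r)"
    by (subst prod.remove[OF _ a]) auto
  also have "(\<Prod>r\<in>{0..<k} - {i}. Y - of_nat i + of_nat r) = (Y + 1) * (\<Prod>r\<in>{0..<k} - {i} - {Suc i}. Y - of_nat i + of_nat r)"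
    by (subst prod.remove[OF _ b]) auto
  also have "{0..<k} - {i} - {Suc i} = {0..<k} - {i, Suc i}" by auto
  finally show ?thesis unfolding Qf_def by (simp add: mult.assoc)
qed

lemma step2:
  assumes n: "n = k - 1" and N: "N > 0"
  shows "det (mat n n (\<lambda>(i, u). of_nat (Phi u N k i) :: rat))
       = det (mat n n (\<lambda>(i, u). Qf k i (of_nat (Suc u * N))))
         * (\<Prod>u<n. of_nat (Suc u * N) * (of_nat (Suc u * N) + 1) / fact k)"
proof -
  define c where "c u = (of_nat (Suc u * N) * (of_nat (Suc u * N) + 1) / fact k :: rat)" for u
  define Dm where "Dm = mat n n (\<lambda>(l, u). if l = u then c u else 0)"
  have E: "mat n n (\<lambda>(i, u). of_nat (Phi u N k i) :: rat)
      = mat n n (\<lambda>(i, u). Qf k i (of_nat (Suc u * N))) * Dm"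
    unfolding Dm_def mat_mult_entry
  proof (rule eq_matI)
    fix i u assume "i < dim_row (mat n n (\<lambda>(i, j). \<Sum>l<n. (case (i, l) of (i, u) \<Rightarrow> Qf k i (of_nat (Suc u * N))) * (case (l, j) of (l, u) \<Rightarrow> if l = u then c u else 0)))"
      "u < dim_col (mat n n (\<lambda>(i, j). \<Sum>l<n. (case (i, l) of (i, u) \<Rightarrow> Qf k i (of_nat (Suc u * N))) * (case (l, j) of (l, u) \<Rightarrow> if l = u then c u else 0)))"
    then have i: "i < n" and u: "u < n" by auto
    have "(of_nat (Phi u N k i) :: rat) = (\<Prod>r<k. of_nat (Suc u * N) - of_nat i + of_nat r) / fact k"
      unfolding Phi_formula[OF N] using i n by (intro choose_as_prod) auto
    also have "\<dots> = Qf k i (of_nat (Suc u * N)) * c u"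
      using i n by (simp add: prod_split_Qf c_def)
    finally show "mat n n (\<lambda>(i, u). of_nat (Phi u N k i) :: rat) $$ (i, u)
      = mat n n (\<lambda>(i, j). \<Sum>l<n. (case (i, l) of (i, u) \<Rightarrow> Qf k i (of_nat (Suc u * N))) * (case (l, j) of (l, u) \<Rightarrow> if l = u then c u else 0)) $$ (i, u)"
      using i u by (simp add: if_distrib sum.delta' cong: if_cong)
  qed auto
  have dD: "det Dm = (\<Prod>u<n. c u)"
    unfolding Dm_def by (subst det_ut) auto
  show ?thesis
    unfolding E c_def[symmetric] dD[symmetric]
    by (rule det_mult[of _ n]) (auto simp: Dm_def)
qed

definition qp :: "nat \<Rightarrow> nat \<Rightarrow> rat poly" where
  "qp k i = (\<Prod>r\<in>{0..<k} - {i, Suc i}. [:of_nat r - of_nat i, 1:])"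

lemma poly_qp: "poly (qp k i) Y = Qf k i Y"
  unfolding qp_def Qf_def poly_prod by (intro prod.cong) (auto simp: algebra_simps)

lemma degree_qp:
  assumes "i < k - 1"
  shows "degree (qp k i) < k - 1"
proof -
  have "degree (qp k i) \<le> (\<Sum>r\<in>{0..<k} - {i, Suc i}. degree [:of_nat r - of_nat i, 1 :: rat:])"
    unfolding qp_def using degree_prod_sum_le[of "{0..<k} - {i, Suc i}" "\<lambda>r. [:of_nat r - of_nat i, 1 :: rat:]"]
    by (simp add: o_def)
  also have "\<dots> = card ({0..<k} - {i, Suc i})" by simp
  also have "\<dots> = k - 2" using assms by (subst card_Diff_subset) auto
  finally show ?thesis using assms by simp
qed

lemma ifz_mult: "(if P then a else 0) * c = (if P then a * c else (0::rat))" by simp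

lemma poly_sum_n:
  fixes p :: "rat poly"
  assumes "degree p < n"
  shows "poly p x = (\<Sum>j<n. coeff p j * x ^ j)"
proof -
  have "poly p x = (\<Sum>j\<le>degree p. coeff p j * x ^ j)" by (rule poly_altdef)
  also have "\<dots> = (\<Sum>j<n. coeff p j * x ^ j)"
    using assms by (intro sum.mono_neutral_left) (auto simp: coeff_eq_0)
  finally show ?thesis .
qed

lemma step3:
  assumes n: "n = k - 1"
  shows "det (mat n n (\<lambda>(i, u). Qf k i (a * of_nat (Suc u))))
       = a ^ (\<Sum>j<n. j) * det (mat n n (\<lambda>(i, u). Qf k i (of_nat (Suc u))))"
proof -
  define Cf where "Cf = mat n n (\<lambda>(i, j). coeff (qp k i) j)"
  define Dg where "Dg b = mat n n (\<lambda>(j, l). if j = l then (b :: rat) ^ j else 0)" for b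
  define Vz where "Vz = mat n n (\<lambda>(l, u). (of_nat (Suc u) :: rat) ^ l)"
  have gen: "mat n n (\<lambda>(i, u). Qf k i (b * of_nat (Suc u))) = Cf * (Dg b * Vz)" for b
  proof -
    have DV: "Dg b * Vz = mat n n (\<lambda>(j, u). b ^ j * of_nat (Suc u) ^ j)"
      unfolding Dg_def Vz_def mat_mult_entry
      by (rule eq_matI) (auto simp: ifz_mult sum.delta)
    show ?thesis
      unfolding DV Cf_def mat_mult_entry
    proof (rule eq_matI)
      fix i u assume "i < dim_row (mat n n (\<lambda>(i, j). \<Sum>l<n. (case (i, l) of (i, j) \<Rightarrow> coeff (qp k i) j) * (case (l, j) of (j, u) \<Rightarrow> b ^ j * of_nat (Suc u) ^ j)))"
        "u < dim_col (mat n n (\<lambda>(i, j). \<Sum>l<n. (case (i, l) of (i, j) \<Rightarrow> coeff (qp k i) j) * (case (l, j) of (j, u) \<Rightarrow> b ^ j * of_nat (Suc u) ^ j)))"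
      then have i: "i < n" and u: "u < n" by auto
      have "Qf k i (b * of_nat (Suc u)) = (\<Sum>j<n. coeff (qp k i) j * (b * of_nat (Suc u)) ^ j)"
        unfolding poly_qp[symmetric] using degree_qp[of i k] i n by (intro poly_sum_n) auto
      then show "mat n n (\<lambda>(i, u). Qf k i (b * of_nat (Suc u))) $$ (i, u) =
        mat n n (\<lambda>(i, j). \<Sum>l<n. (case (i, l) of (i, j) \<Rightarrow> coeff (qp k i) j) * (case (l, j) of (j, u) \<Rightarrow> b ^ j * of_nat (Suc u) ^ j)) $$ (i, u)"
        using i u by (simp add: power_mult_distrib)
    qed auto
  qed
  have dDg: "det (Dg b) = b ^ (\<Sum>j<n. j)" for b
    unfolding Dg_def by (subst det_ut) (auto simp: power_sum)
  have detgen: "det (mat n n (\<lambda>(i, u). Qf k i (b * of_nat (Suc u)))) = det Cf * (b ^ (\<Sum>j<n. j) * det Vz)" for b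
    unfolding gen dDg[symmetric]
    by (subst det_mult[of _ n], auto simp: Cf_def Dg_def Vz_def intro!: det_mult)
  show ?thesis using detgen[of a] detgen[of 1] by simp
qed

lemma step4:
  assumes n: "n = k - 1"
  shows "det (mat n n (\<lambda>(i, u). Qf k i (of_nat (Suc u)))) = (\<Prod>i<n. Qf k i (of_nat (Suc i)))"
proof (subst det_ut)
  fix i u assume ui: "u < i" and i: "i < n"
  have mem: "i - Suc u \<in> {0..<k} - {i, Suc i}" using ui i n by auto
  have z: "(of_nat (Suc u) :: rat) - of_nat i + of_nat (i - Suc u) = 0" using ui by (simp add: of_nat_diff)
  show "(case (i, u) of (i, u) \<Rightarrow> Qf k i (of_nat (Suc u))) = 0"
    unfolding Qf_def using mem z
    by (simp, metis (no_types, lifting) finite_Diff finite_atLeastLessThan prod_zero_iff)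
qed simp

lemma Qf_diag:
  assumes "i < k - 1"
  shows "Qf k i (of_nat (Suc i)) * (of_nat (Suc i) * of_nat (Suc (Suc i))) = fact k"
proof -
  have "(\<Prod>r<k. (of_nat (Suc i) :: rat) - of_nat i + of_nat r) = of_nat (Suc i) * (of_nat (Suc i) + 1) * Qf k i (of_nat (Suc i))"
    by (rule prod_split_Qf[OF assms])
  moreover have "(\<Prod>r<k. (of_nat (Suc i) :: rat) - of_nat i + of_nat r) = fact k"
    unfolding pochhammer_fact pochhammer_prod by (simp add: lessThan_atLeast0 add.commute)
  ultimately show ?thesis by (simp add: algebra_simps)
qed

lemma prod_shift1: "(\<Prod>i<n. f (Suc i)) = (\<Prod>i=1..n. (f i :: 'a::comm_monoid_mult))"
  by (induction n) (auto simp: prod.atLeast1_atMost_eq)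

lemma prod_plus2: "(\<Prod>i<n. (of_nat (Suc (Suc i)) :: rat)) = fact (Suc n)"
  by (induction n) (auto simp: algebra_simps)

lemma sum_choose2: "(\<Sum>j<n. j) + n = Suc n choose 2"
  by (induction n) (auto simp: numeral_2_eq_2)

theorem mainTheorem11:
  fixes k N :: nat
  assumes "k \<ge> 2" and "N \<ge> 2"
  shows "(of_int (det (Htilde k N)) :: rat)
         = of_nat N ^ (k choose 2) / of_nat (fact k) * (\<Prod>i=1..k-1. of_nat (i * N + 1))"
proof -
  define n where "n = k - 1"
  have N: "N > 0" using assms by simp
  have kn: "k = Suc n" using assms n_def by simp
  define c where "c u = (of_nat (Suc u * N) * (of_nat (Suc u * N) + 1) / fact k :: rat)" for u
  have "(of_int (det (Htilde k N)) :: rat) = det (map_mat (of_int :: int \<Rightarrow> rat) (Htilde k N))"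
    by simp
  also have "\<dots> = det (mat n n (\<lambda>(i, u). of_nat (Phi u N k i) :: rat))"
    by (rule step1[OF N n_def])
  also have "\<dots> = det (mat n n (\<lambda>(i, u). Qf k i (of_nat (Suc u * N)))) * (\<Prod>u<n. c u)"
    unfolding c_def by (rule step2[OF n_def N])
  also have "mat n n (\<lambda>(i, u). Qf k i (of_nat (Suc u * N))) = mat n n (\<lambda>(i, u). Qf k i (of_nat N * of_nat (Suc u)))"
    by (intro arg_cong[where f="mat n n"] ext) (auto simp: algebra_simps)
  also have "det \<dots> = of_nat N ^ (\<Sum>j<n. j) * (\<Prod>i<n. Qf k i (of_nat (Suc i)))"
    unfolding step3[OF n_def] step4[OF n_def] ..
  finally have D: "(of_int (det (Htilde k N)) :: rat) = of_nat N ^ (\<Sum>j<n. j) * (\<Prod>i<n. Qf k i (of_nat (Suc i)) * c i)"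
    by (simp add: prod.distrib mult.assoc)
  have each: "Qf k i (of_nat (Suc i)) * c i = of_nat N * of_nat (Suc i * N + 1) / of_nat (Suc (Suc i))" if i: "i < n" for i
  proof -
    have nz: "(of_nat (Suc i) * of_nat (Suc (Suc i)) :: rat) \<noteq> 0" by (simp del: of_nat_Suc)
    have q: "Qf k i (of_nat (Suc i)) = fact k / (of_nat (Suc i) * of_nat (Suc (Suc i)))"
      unfolding nonzero_eq_divide_eq[OF nz] by (rule Qf_diag) (use i n_def in simp)
    have alg: "F / (A * B) * ((Nn * A) * Y1 / F) = Nn * Y1 / B"
      if "F \<noteq> 0" "A \<noteq> 0" "B \<noteq> 0" for F A B Nn Y1 :: rat
      using that by (simp add: field_simps)
    have Y: "(of_nat (Suc i * N) :: rat) = of_nat N * of_nat (Suc i)" by (simp only: of_nat_mult mult.commute)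
    have Y1: "(of_nat (Suc i * N) + 1 :: rat) = of_nat (Suc i * N + 1)" by simp
    show ?thesis unfolding q c_def Y1 unfolding Y
      by (rule alg) (simp_all del: of_nat_Suc)
  qed
  have "(\<Prod>i<n. Qf k i (of_nat (Suc i)) * c i) = (\<Prod>i<n. of_nat N * of_nat (Suc i * N + 1) / of_nat (Suc (Suc i)))"
    using each by (intro prod.cong) auto
  also have "\<dots> = of_nat N ^ n * (\<Prod>i<n. of_nat (Suc i * N + 1)) / fact k"
    unfolding prod_dividef prod.distrib prod_constant prod_plus2 card_lessThan kn[symmetric] ..
  also have "(\<Prod>i<n. (of_nat (Suc i * N + 1) :: rat)) = (\<Prod>i=1..k-1. of_nat (i * N + 1))"
    using prod_shift1[of "\<lambda>i. (of_nat (i * N + 1) :: rat)" n] n_def by simp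
  finally have P: "(\<Prod>i<n. Qf k i (of_nat (Suc i)) * c i) = of_nat N ^ n * (\<Prod>i=1..k-1. of_nat (i * N + 1)) / fact k" .
  have ex: "(\<Sum>j<n. j) + n = k choose 2" using sum_choose2[of n] kn by simp
  show ?thesis unfolding D P ex[symmetric] power_add by (simp add: field_simps)
qed

end
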